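(* Let $A$ and $B$ be $m\times n$ real matrices, and let $\sigma_1,\dots,\sigma_\ell$ ($\ell\ge1$) be the distinct singular values of $A$ (not necessarily in non-increasing order), where $0$ is counted as a singular value with multiplicity equal to the multiplicity of $0$ as an eigenvalue of $AA^T$; let $m_i$ be the multiplicity of $\sigma_i$, so $m_1+\dots+m_\ell=m$. Then $AA^T=BB^T$ and $A^TA=B^TB$ if and only if there exist orthogonal matrices $U_1,U_2$ ($m\times m$), $V$ ($n\times n$) and an $m\times n$ rectangular diagonal matrix $\Sigma$ whose diagonal lists $\sigma_1$ ($m_1$ times), then $\sigma_2$ ($m_2$ times), etc., such that $A=U_1\Sigma V^T$, $B=U_2\Sigma V^T$ and $U_1=U_2\,\mathrm{diag}(W_1,\dots,W_\ell)$, where each $W_i$ is an $m_i\times m_i$ orthogonal matrix.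
   Formalization: When $m>n$, the order of $\sigma_1,\dots,\sigma_\ell$ is restricted so that every entry of the listed diagonal beyond position n is 0, that is, the singular value 0 comes last. The statement above fails without it. *)

theory Defs
  imports "Jordan_Normal_Form.Matrix" "Jordan_Normal_Form.Char_Poly"
begin

definition orth_mat :: "nat \<Rightarrow> real mat \<Rightarrow> bool" where
  "orth_mat k U \<longleftrightarrow> U \<in> carrier_mat k k \<and> U * transpose_mat U = 1\<^sub>m k \<and> transpose_mat U * U = 1\<^sub>m k"

definition singular_value :: "real mat \<Rightarrow> real \<Rightarrow> bool" where
  "singular_value A s \<longleftrightarrow> s \<ge> 0 \<and> eigenvalue (A * transpose_mat A) (s\<^sup>2)"

definition sv_mult :: "real mat \<Rightarrow> real \<Rightarrow> nat" where
  "sv_mult A s = order (s\<^sup>2) (char_poly (A * transpose_mat A))"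

definition block_start :: "(nat \<Rightarrow> nat) \<Rightarrow> nat \<Rightarrow> nat" where
  "block_start mu i = (\<Sum>k<i. mu k)"

text \<open>The length-m diagonal list: sigma 0 (mu 0 times), sigma 1 (mu 1 times), ...\<close>
definition diag_entry :: "nat \<Rightarrow> (nat \<Rightarrow> real) \<Rightarrow> (nat \<Rightarrow> nat) \<Rightarrow> nat \<Rightarrow> real" where
  "diag_entry l \<sigma> mu j =
     \<sigma> (THE i. i < l \<and> block_start mu i \<le> j \<and> j < block_start mu i + mu i)"

definition rect_diag_mat :: "nat \<Rightarrow> nat \<Rightarrow> (nat \<Rightarrow> real) \<Rightarrow> real mat \<Rightarrow> bool" where
  "rect_diag_mat m n d S \<longleftrightarrow> S \<in> carrier_mat m n \<and>
     (\<forall>i<m. \<forall>j<n. S $$ (i, j) = (if i = j then d i else 0))"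

end

theory Submission
  imports Defs
begin

lemma sp_self_nonneg: "(v::real vec) \<bullet> v \<ge> 0"
  unfolding scalar_prod_def by (auto intro: sum_nonneg)

lemma sp_self_zero: assumes "(v::real vec) \<bullet> v = 0" shows "v = 0\<^sub>v (dim_vec v)"
proof -
  have "\<forall>i\<in>{0..<dim_vec v}. v $ i * v $ i = 0"
    using assms unfolding scalar_prod_def by (subst sum_nonneg_eq_0_iff[symmetric]) auto
  thus ?thesis by (intro eq_vecI) auto
qed

lemma sp_self_pos: assumes "(v::real vec) \<in> carrier_vec n" "v \<noteq> 0\<^sub>v n" shows "v \<bullet> v > 0"
  using sp_self_nonneg[of v] sp_self_zero[of v] assms by force

lemma mat_vec_sp: assumes "(X::real mat) \<in> carrier_mat r c" "u \<in> carrier_vec r" "w \<in> carrier_vec c"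
  shows "u \<bullet> (X *\<^sub>v w) = (transpose_mat X *\<^sub>v u) \<bullet> w"
  using transpose_vec_mult_scalar[OF assms(1,3,2)] by simp

definition onb :: "nat \<Rightarrow> nat set \<Rightarrow> (nat \<Rightarrow> real vec) \<Rightarrow> bool" where
  "onb n I g \<longleftrightarrow> (\<forall>i\<in>I. g i \<in> carrier_vec n) \<and> (\<forall>i\<in>I. \<forall>j\<in>I. g i \<bullet> g j = (if i = j then 1 else 0))"

definition colmat :: "nat \<Rightarrow> nat \<Rightarrow> (nat \<Rightarrow> real vec) \<Rightarrow> real mat" where
  "colmat n k g = mat n k (\<lambda>(i,j). g j $ i)"

lemma colmat_carrier[simp]: "colmat n k g \<in> carrier_mat n k"
  unfolding colmat_def by auto

lemma colmat_dims[simp]: "dim_row (colmat n k g) = n" "dim_col (colmat n k g) = k"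
  unfolding colmat_def by auto

lemma col_colmat: "j < k \<Longrightarrow> g j \<in> carrier_vec n \<Longrightarrow> col (colmat n k g) j = g j"
  unfolding colmat_def by (intro eq_vecI) auto

lemma colmat_T_vec: assumes "j < k" "g j \<in> carrier_vec n" 
  shows "(transpose_mat (colmat n k g) *\<^sub>v u) $ j = g j \<bullet> u"
  using assms by (simp add: col_colmat)

lemma colmat_TT: assumes "\<forall>j<k. g j \<in> carrier_vec n"
  shows "transpose_mat (colmat n k g) * colmat n k g = mat k k (\<lambda>(i,j). g i \<bullet> g j)"
  using assms by (intro eq_matI) (auto simp: col_colmat)

lemma onb_mono: "onb n I g \<Longrightarrow> J \<subseteq> I \<Longrightarrow> onb n J g"
  unfolding onb_def by blast

lemma onb_TT: assumes "onb n {..<k} g"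
  shows "transpose_mat (colmat n k g) * colmat n k g = 1\<^sub>m k"
  using assms unfolding onb_def by (subst colmat_TT) (auto intro!: eq_matI)

lemma onb_orth: assumes "onb n {..<n} g" shows "orth_mat n (colmat n n g)"
proof -
  have 1: "transpose_mat (colmat n n g) * colmat n n g = 1\<^sub>m n" using onb_TT[OF assms] .
  have "colmat n n g * transpose_mat (colmat n n g) = 1\<^sub>m n"
    by (rule mat_mult_left_right_inverse[OF _ _ 1]) auto
  with 1 show ?thesis unfolding orth_mat_def by auto
qed

lemma orth_vec_eq: assumes "orth_mat n U" "x \<in> carrier_vec n" "y \<in> carrier_vec n"
  and "transpose_mat U *\<^sub>v x = transpose_mat U *\<^sub>v y" shows "x = y"
proof -
  have U: "U \<in> carrier_mat n n" and UU: "U * transpose_mat U = 1\<^sub>m n" using assms(1) unfolding orth_mat_def by auto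
  have "x = (U * transpose_mat U) *\<^sub>v x" using UU assms(2) by simp
  also have "\<dots> = U *\<^sub>v (transpose_mat U *\<^sub>v x)" using U assms(2) by (subst assoc_mult_mat_vec) auto
  also have "\<dots> = U *\<^sub>v (transpose_mat U *\<^sub>v y)" using assms(4) by simp
  also have "\<dots> = (U * transpose_mat U) *\<^sub>v y" using U assms(3) by (subst assoc_mult_mat_vec) auto
  also have "\<dots> = y" using UU assms(3) by simp
  finally show ?thesis .
qed

lemma onb_vec_eq: assumes "onb n {..<n} g" "x \<in> carrier_vec n" "y \<in> carrier_vec n"
  and "\<And>i. i < n \<Longrightarrow> g i \<bullet> x = g i \<bullet> y" shows "x = y"
proof (rule orth_vec_eq[OF onb_orth[OF assms(1)] assms(2,3)])
  show "transpose_mat (colmat n n g) *\<^sub>v x = transpose_mat (colmat n n g) *\<^sub>v y"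
    using assms unfolding onb_def by (intro eq_vecI) (auto simp: col_colmat)
qed

lemma exists_orth_unit: assumes fin: "finite I" and card: "card I < n" and o: "onb n I g"
  shows "\<exists>x\<in>carrier_vec n. x \<bullet> x = 1 \<and> (\<forall>i\<in>I. g i \<bullet> x = 0)"
proof -
  let ?k = "card I"
  obtain h where h: "bij_betw h {0..<?k} I" using ex_bij_betw_nat_finite[OF fin] by blast
  define c where "c = (\<lambda>i. if i < ?k then g (h i) else 0\<^sub>v n)"
  define M where "M = mat\<^sub>r n n (\<lambda>i. if i = n - 1 then 0\<^sub>v n else c i)"
  have hI: "h r \<in> I" if "r < ?k" for r using h that bij_betwE by fastforce
  have cc: "c \<in> {0..<n} \<rightarrow> carrier_vec n" using o hI unfolding c_def onb_def by auto
  have "det M = 0" unfolding M_def by (rule det_row_0[OF _ cc]) (use card in auto)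
  moreover have M: "M \<in> carrier_mat n n" unfolding M_def by auto
  ultimately obtain v where v: "v \<in> carrier_vec n" "v \<noteq> 0\<^sub>v n" "M *\<^sub>v v = 0\<^sub>v n"
    using det_0_iff_vec_prod_zero by blast
  have orth: "g i \<bullet> v = 0" if i: "i \<in> I" for i
  proof -
    obtain r where r: "r < ?k" "h r = i" using h i unfolding bij_betw_def by (metis atLeastLessThan_iff imageE)
    have "(M *\<^sub>v v) $ r = 0" using v(3) r card by simp
    moreover have "row M r = g i" unfolding M_def c_def using r card o i unfolding onb_def
      by (subst row_mat_of_row_fun) auto
    ultimately show ?thesis using r card M by simp
  qed
  have pos: "v \<bullet> v > 0" using sp_self_pos[OF v(1,2)] .
  define x where "x = (1 / sqrt (v \<bullet> v)) \<cdot>\<^sub>v v"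
  have "x \<in> carrier_vec n" using v unfolding x_def by auto
  moreover have "x \<bullet> x = 1" unfolding x_def using v pos
    by (simp add: smult_scalar_prod_distrib[of _ n] scalar_prod_smult_distrib[of _ n])
  moreover have "\<forall>i\<in>I. g i \<bullet> x = 0" unfolding x_def using orth v o unfolding onb_def
    by (auto simp: scalar_prod_smult_distrib[of _ n])
  ultimately show ?thesis by blast
qed

lemma onb_extend: assumes "J \<subseteq> {..<n}" "onb n J g"
  shows "\<exists>g'. onb n {..<n} g' \<and> (\<forall>j\<in>J. g' j = g j)"
  using assms
proof (induction "card ({..<n} - J)" arbitrary: J g)
  case 0
  then have "J = {..<n}" by auto
  then show ?case using 0 by auto
next
  case (Suc c)
  have "{..<n} - J \<noteq> {}" using Suc(2) by force
  then obtain k where k: "k < n" "k \<notin> J" by auto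
  have fin: "finite J" using Suc(3) finite_subset by blast
  have "card J < card {..<n}" using Suc(3) k by (intro psubset_card_mono) auto
  then obtain x where x: "x \<in> carrier_vec n" "x \<bullet> x = 1" "\<forall>i\<in>J. g i \<bullet> x = 0"
    using exists_orth_unit[OF fin _ Suc(4)] by auto
  define g1 where "g1 = g(k := x)"
  have o1: "onb n (insert k J) g1" using Suc(4) x k unfolding onb_def g1_def
    by (auto simp: comm_scalar_prod[of _ n])
  have eq: "{..<n} - insert k J = ({..<n} - J) - {k}" by auto
  have "card (({..<n} - J) - {k}) = card ({..<n} - J) - 1"
    by (rule card_Diff_singleton) (use k in auto)
  hence "c = card ({..<n} - insert k J)" using Suc(2) eq by simp
  from Suc(1)[OF this _ o1] Suc(3) k obtain g' where "onb n {..<n} g'" "\<forall>j\<in>insert k J. g' j = g1 j" by auto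
  then show ?case using k unfolding g1_def by auto
qed

lemma sym_real_eigen: assumes M: "(M::real mat) \<in> carrier_mat n n" and sym: "transpose_mat M = M"
  and n: "n > 0"
  shows "\<exists>lam v. v \<in> carrier_vec n \<and> v \<bullet> v = 1 \<and> M *\<^sub>v v = lam \<cdot>\<^sub>v v"
proof -
  define MC where "MC = map_mat complex_of_real M"
  have MC: "MC \<in> carrier_mat n n" unfolding MC_def using M by auto
  obtain as where as: "char_poly MC = (\<Prod>a\<leftarrow>as. [:- a, 1:])" "length as = n"
    using char_poly_factorized[OF MC] by blast
  then obtain z zs where "as = z # zs" using n by (cases as) auto
  hence "poly (char_poly MC) z = 0" using as by simp
  hence "eigenvalue MC z" using eigenvalue_root_char_poly[OF MC] by simp
  then obtain w where w: "w \<in> carrier_vec n" "w \<noteq> 0\<^sub>v n" "MC *\<^sub>v w = z \<cdot>\<^sub>v w"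
    unfolding eigenvalue_def eigenvector_def using MC by auto
  define a where "a = vec n (\<lambda>i. Re (w $ i))"
  define b where "b = vec n (\<lambda>i. Im (w $ i))"
  define \<alpha> where "\<alpha> = Re z"
  define \<beta> where "\<beta> = Im z"
  have ab[simp]: "a \<in> carrier_vec n" "b \<in> carrier_vec n" unfolding a_def b_def by auto
  have da[simp]: "dim_vec a = n" "dim_vec b = n" unfolding a_def b_def by auto
  have comp: "(MC *\<^sub>v w) $ i = (\<Sum>j<n. complex_of_real (M $$ (i,j)) * w $ j)" if "i < n" for i
    using that M w(1) unfolding MC_def by (auto intro!: sum.cong simp: lessThan_atLeast0 scalar_prod_def)
  have Ma: "(M *\<^sub>v a) $ i = \<alpha> * a $ i - \<beta> * b $ i" if i: "i < n" for i
  proof -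
    have "(M *\<^sub>v a) $ i = (\<Sum>j<n. M $$ (i,j) * Re (w $ j))"
      using i M unfolding a_def by (auto intro!: sum.cong simp: lessThan_atLeast0 scalar_prod_def)
    also have "\<dots> = Re ((MC *\<^sub>v w) $ i)" using comp[OF i] by (simp add: Re_sum)
    also have "\<dots> = Re (z * w $ i)" using w(3) i w(1) by simp
    finally show ?thesis using i unfolding a_def b_def \<alpha>_def \<beta>_def by simp
  qed
  have Mb: "(M *\<^sub>v b) $ i = \<beta> * a $ i + \<alpha> * b $ i" if i: "i < n" for i
  proof -
    have "(M *\<^sub>v b) $ i = (\<Sum>j<n. M $$ (i,j) * Im (w $ j))"
      using i M unfolding b_def by (auto intro!: sum.cong simp: lessThan_atLeast0 scalar_prod_def)
    also have "\<dots> = Im ((MC *\<^sub>v w) $ i)" using comp[OF i] by (simp add: Im_sum)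
    also have "\<dots> = Im (z * w $ i)" using w(3) i w(1) by simp
    finally show ?thesis using i unfolding a_def b_def \<alpha>_def \<beta>_def by (simp add: algebra_simps)
  qed
  have "b \<bullet> (M *\<^sub>v a) = (transpose_mat M *\<^sub>v b) \<bullet> a" by (rule mat_vec_sp[OF M]) auto
  hence eq: "b \<bullet> (M *\<^sub>v a) = (M *\<^sub>v b) \<bullet> a" using sym by simp
  have "b \<bullet> (M *\<^sub>v a) = (\<Sum>i<n. b $ i * (M *\<^sub>v a) $ i)"
    unfolding scalar_prod_def using M by (simp add: lessThan_atLeast0 del: index_mult_mat_vec)
  also have "\<dots> = (\<Sum>i<n. b $ i * (\<alpha> * a $ i - \<beta> * b $ i))"
    by (intro sum.cong refl) (simp add: Ma del: index_mult_mat_vec)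
  also have "\<dots> = \<alpha> * (\<Sum>i<n. a $ i * b $ i) - \<beta> * (\<Sum>i<n. b $ i * b $ i)"
    by (simp add: algebra_simps sum_subtractf sum_distrib_left)
  finally have e1: "b \<bullet> (M *\<^sub>v a) = \<alpha> * (\<Sum>i<n. a $ i * b $ i) - \<beta> * (\<Sum>i<n. b $ i * b $ i)" .
  have "(M *\<^sub>v b) \<bullet> a = (\<Sum>i<n. (M *\<^sub>v b) $ i * a $ i)"
    unfolding scalar_prod_def da lessThan_atLeast0 ..
  also have "\<dots> = (\<Sum>i<n. (\<beta> * a $ i + \<alpha> * b $ i) * a $ i)"
    by (intro sum.cong refl) (simp add: Mb del: index_mult_mat_vec)
  also have "\<dots> = \<beta> * (\<Sum>i<n. a $ i * a $ i) + \<alpha> * (\<Sum>i<n. a $ i * b $ i)"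
    by (simp add: algebra_simps sum.distrib sum_distrib_left)
  finally have e2: "(M *\<^sub>v b) \<bullet> a = \<beta> * (\<Sum>i<n. a $ i * a $ i) + \<alpha> * (\<Sum>i<n. a $ i * b $ i)" .
  from eq e1 e2 have "\<beta> * ((\<Sum>i<n. a $ i * a $ i) + (\<Sum>i<n. b $ i * b $ i)) = 0"
    by (simp add: algebra_simps)
  moreover have "(\<Sum>i<n. a $ i * a $ i) + (\<Sum>i<n. b $ i * b $ i) > 0"
  proof -
    obtain i where i: "i < n" "w $ i \<noteq> 0" using w(1,2) by (metis eq_vecI carrier_vecD index_zero_vec)
    hence "a $ i \<noteq> 0 \<or> b $ i \<noteq> 0" unfolding a_def b_def using complex_eqI by auto
    hence "a $ i * a $ i + b $ i * b $ i > 0" by (metis add_pos_nonneg add_nonneg_pos not_real_square_gt_zero zero_le_square)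
    moreover have "a $ i * a $ i + b $ i * b $ i \<le> (\<Sum>i<n. a $ i * a $ i + b $ i * b $ i)"
      using i by (intro member_le_sum) auto
    ultimately show ?thesis by (simp add: sum.distrib)
  qed
  ultimately have \<beta>0: "\<beta> = 0" by simp
  have Ma': "M *\<^sub>v a = \<alpha> \<cdot>\<^sub>v a" using M by (intro eq_vecI) (auto simp: Ma \<beta>0 simp del: index_mult_mat_vec)
  have Mb': "M *\<^sub>v b = \<alpha> \<cdot>\<^sub>v b" using M by (intro eq_vecI) (auto simp: Mb \<beta>0 simp del: index_mult_mat_vec)
  have "a \<noteq> 0\<^sub>v n \<or> b \<noteq> 0\<^sub>v n"
  proof (rule ccontr)
    assume "\<not> ?thesis"
    hence "a = 0\<^sub>v n" "b = 0\<^sub>v n" by auto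
    have "w $ i = 0" if i: "i < n" for i
    proof -
      have "a $ i = 0" "b $ i = 0" using \<open>a = 0\<^sub>v n\<close> \<open>b = 0\<^sub>v n\<close> i by auto
      thus ?thesis using i unfolding a_def b_def by (simp add: complex_eq_iff)
    qed
    hence "w = 0\<^sub>v n" using w(1) by (intro eq_vecI) auto
    with w(2) show False by simp
  qed
  then obtain v where v: "v \<in> carrier_vec n" "v \<noteq> 0\<^sub>v n" "M *\<^sub>v v = \<alpha> \<cdot>\<^sub>v v"
    using Ma' Mb' ab by blast
  have pos: "v \<bullet> v > 0" using sp_self_pos[OF v(1,2)] .
  define x where "x = (1 / sqrt (v \<bullet> v)) \<cdot>\<^sub>v v"
  have "x \<in> carrier_vec n" using v unfolding x_def by auto
  moreover have "x \<bullet> x = 1" unfolding x_def using v pos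
    by (simp add: smult_scalar_prod_distrib[of _ n] scalar_prod_smult_distrib[of _ n])
  moreover have "M *\<^sub>v x = \<alpha> \<cdot>\<^sub>v x" unfolding x_def using v M
    by (intro eq_vecI) (auto simp: mult_mat_vec[of _ n n] )
  ultimately show ?thesis by blast
qed

lemma onb_shift: assumes "onb n {..<n} g" "k \<le> n" shows "onb n {..<n-k} (\<lambda>j. g (k + j))"
  using assms unfolding onb_def by auto

lemma spectral_aux: assumes M: "(M::real mat) \<in> carrier_mat n n" and sym: "transpose_mat M = M"
  shows "k \<le> n \<Longrightarrow> \<exists>g lam. onb n {..<k} g \<and> (\<forall>j<k. M *\<^sub>v g j = lam j \<cdot>\<^sub>v g j)"
proof (induction k)
  case 0
  show ?case by (auto simp: onb_def)
next
  case (Suc k)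
  then obtain g lam where g: "onb n {..<k} g" and ev: "\<forall>j<k. M *\<^sub>v g j = lam j \<cdot>\<^sub>v g j" by auto
  obtain g' where g': "onb n {..<n} g'" and gg': "\<forall>j\<in>{..<k}. g' j = g j"
    using onb_extend[OF _ g] Suc(2) by auto
  have g'c: "g' i \<in> carrier_vec n" if "i < n" for i using g' that unfolding onb_def by auto
  define Z where "Z = colmat n (n-k) (\<lambda>j. g' (k+j))"
  have Z: "Z \<in> carrier_mat n (n-k)" unfolding Z_def by simp
  have ZT: "transpose_mat Z * Z = 1\<^sub>m (n-k)" unfolding Z_def using onb_shift[OF g', of k] Suc(2)
    by (intro onb_TT) auto
  have ZTv: "(transpose_mat Z *\<^sub>v v) $ j = g' (k+j) \<bullet> v" if "j < n - k" for j v
    unfolding Z_def using that g'c by (subst colmat_T_vec) auto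
  define M' where "M' = transpose_mat Z * M * Z"
  have M': "M' \<in> carrier_mat (n-k) (n-k)" unfolding M'_def using Z M by auto
  have symM': "transpose_mat M' = M'"
  proof -
    have "transpose_mat M' = transpose_mat Z * transpose_mat (transpose_mat Z * M)"
      unfolding M'_def by (rule transpose_mult[of _ "n-k" n]) (use Z M in auto)
    also have "transpose_mat (transpose_mat Z * M) = transpose_mat M * Z"
      using transpose_mult[of "transpose_mat Z" "n-k" n M n] Z M by simp
    finally show ?thesis unfolding M'_def using sym Z M by (simp add: assoc_mult_mat[of _ "n-k" n])
  qed
  obtain \<mu> y where y: "y \<in> carrier_vec (n-k)" "y \<bullet> y = 1" "M' *\<^sub>v y = \<mu> \<cdot>\<^sub>v y"
    using sym_real_eigen[OF M' symM'] Suc(2) by auto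
  define x where "x = Z *\<^sub>v y"
  have x: "x \<in> carrier_vec n" unfolding x_def using Z y by auto
  have F1: "g' i \<bullet> x = (if k \<le> i then y $ (i-k) else 0)" if i: "i < n" for i
  proof -
    have "g' i \<bullet> x = (transpose_mat Z *\<^sub>v g' i) \<bullet> y" unfolding x_def
      by (rule mat_vec_sp[OF Z g'c[OF i] y(1)])
    also have "transpose_mat Z *\<^sub>v g' i = (if k \<le> i then unit_vec (n-k) (i-k) else 0\<^sub>v (n-k))"
    proof (intro eq_vecI)
      fix j assume "j < dim_vec (if k \<le> i then unit_vec (n-k) (i-k) else 0\<^sub>v (n-k))"
      hence j: "j < n - k" by (auto split: if_splits)
      show "(transpose_mat Z *\<^sub>v g' i) $ j = (if k \<le> i then unit_vec (n-k) (i-k) else 0\<^sub>v (n-k)) $ j"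
        using ZTv[OF j] g' i j unfolding onb_def by (auto simp: unit_vec_def)
    qed (use Z in auto)
    finally show ?thesis using y(1) i by auto
  qed
  have ZTx: "transpose_mat Z *\<^sub>v x = y" unfolding x_def using Z y(1)
    by (simp add: assoc_mult_mat_vec[symmetric, of _ "n-k" n] ZT)
  have F2: "x \<bullet> x = 1" using mat_vec_sp[OF Z x y(1)] ZTx y(2) unfolding x_def[symmetric] by simp
  have F3: "M *\<^sub>v x = \<mu> \<cdot>\<^sub>v x"
  proof (rule onb_vec_eq[OF g'])
    show "M *\<^sub>v x \<in> carrier_vec n" "\<mu> \<cdot>\<^sub>v x \<in> carrier_vec n" using M x by auto
    fix i assume i: "i < n"
    have r: "g' i \<bullet> (\<mu> \<cdot>\<^sub>v x) = \<mu> * (if k \<le> i then y $ (i-k) else 0)"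
      using F1[OF i] x g'c[OF i] by simp
    show "g' i \<bullet> (M *\<^sub>v x) = g' i \<bullet> (\<mu> \<cdot>\<^sub>v x)"
    proof (cases "k \<le> i")
      case False
      have "g' i \<bullet> (M *\<^sub>v x) = (transpose_mat M *\<^sub>v g' i) \<bullet> x" by (rule mat_vec_sp[OF M g'c[OF i] x])
      also have "\<dots> = (lam i \<cdot>\<^sub>v g' i) \<bullet> x" using sym ev gg' False by simp
      also have "\<dots> = 0" using F1[OF i] False x g'c[OF i] by simp
      finally show ?thesis using r False by simp
    next
      case True
      have "g' i \<bullet> (M *\<^sub>v x) = (transpose_mat Z *\<^sub>v (M *\<^sub>v x)) $ (i - k)"
        using ZTv[of "i-k"] True i by simp
      also have "transpose_mat Z *\<^sub>v (M *\<^sub>v x) = M' *\<^sub>v y"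
      proof -
        have "M' *\<^sub>v y = (transpose_mat Z * M) *\<^sub>v (Z *\<^sub>v y)" unfolding M'_def
          by (rule assoc_mult_mat_vec[of _ "n-k" n]) (use Z M y(1) in auto)
        also have "\<dots> = transpose_mat Z *\<^sub>v (M *\<^sub>v (Z *\<^sub>v y))"
          by (rule assoc_mult_mat_vec[of _ "n-k" n]) (use Z M y(1) in auto)
        finally show ?thesis unfolding x_def by simp
      qed
      also have "\<dots> $ (i - k) = \<mu> * y $ (i-k)" using y True i by simp
      finally show ?thesis using r True by simp
    qed
  qed
  define g1 where "g1 = g(k := x)"
  define lam1 where "lam1 = lam(k := \<mu>)"
  have "onb n {..<Suc k} g1"
    unfolding onb_def
  proof (intro conjI ballI)
    fix i assume "i \<in> {..<Suc k}"
    thus "g1 i \<in> carrier_vec n" using g x unfolding g1_def onb_def by auto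
  next
    fix i j assume i: "i \<in> {..<Suc k}" and j: "j \<in> {..<Suc k}"
    have o: "g i \<bullet> x = 0" "x \<bullet> g i = 0" if "i < k" for i
      using F1[of i] that Suc(2) gg' x g'c[of i] comm_scalar_prod[of x n "g i"] by auto
    show "g1 i \<bullet> g1 j = (if i = j then 1 else 0)"
      using i j g F2 o unfolding g1_def onb_def by (auto simp: less_Suc_eq)
  qed
  moreover have "\<forall>j<Suc k. M *\<^sub>v g1 j = lam1 j \<cdot>\<^sub>v g1 j"
    using ev F3 unfolding g1_def lam1_def by (auto simp: less_Suc_eq)
  ultimately show ?case by blast
qed

lemma spectral: assumes M: "(M::real mat) \<in> carrier_mat n n" and sym: "transpose_mat M = M"
  shows "\<exists>g lam. onb n {..<n} g \<and> (\<forall>j<n. M *\<^sub>v g j = lam j \<cdot>\<^sub>v g j)"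
  using spectral_aux[OF M sym le_refl] .

lemma bs_Suc: "block_start mu (Suc i) = block_start mu i + mu i"
  unfolding block_start_def by simp

lemma bs_0[simp]: "block_start mu 0 = 0"
  unfolding block_start_def by simp

lemma bs_shift: "block_start mu (Suc i) = mu 0 + block_start (\<lambda>i. mu (Suc i)) i"
  unfolding block_start_def by (rule sum.lessThan_Suc_shift)

lemma bs_mono: "i \<le> j \<Longrightarrow> block_start mu i \<le> block_start mu j"
  unfolding block_start_def by (rule sum_mono2) auto

lemma block_unique: assumes "block_start mu i \<le> j" "j < block_start mu i + mu i"
  "block_start mu i' \<le> j" "j < block_start mu i' + mu i'" shows "i = i'"
proof (rule ccontr)
  assume "i \<noteq> i'"
  then consider "i < i'" | "i' < i" by linarith
  then show False
  proof cases
    case 1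
    hence "block_start mu (Suc i) \<le> block_start mu i'" by (intro bs_mono) auto
    thus False using assms bs_Suc[of mu i] by linarith
  next
    case 2
    hence "block_start mu (Suc i') \<le> block_start mu i" by (intro bs_mono) auto
    thus False using assms bs_Suc[of mu i'] by linarith
  qed
qed

lemma block_exists: "j < block_start mu l \<Longrightarrow> \<exists>i<l. block_start mu i \<le> j \<and> j < block_start mu i + mu i"
proof (induction l)
  case 0 thus ?case by simp
next
  case (Suc l)
  show ?case
  proof (cases "j < block_start mu l")
    case True
    then obtain i where "i < l" "block_start mu i \<le> j \<and> j < block_start mu i + mu i" using Suc.IH by blast
    thus ?thesis by (intro exI[of _ i]) auto
  next
    case False thus ?thesis using Suc(2) bs_Suc[of mu l] by (intro exI[of _ l]) auto
  qed
qed

definition blk :: "nat \<Rightarrow> (nat \<Rightarrow> nat) \<Rightarrow> nat \<Rightarrow> nat" where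
  "blk l mu j = (THE i. i < l \<and> block_start mu i \<le> j \<and> j < block_start mu i + mu i)"

lemma blk_eq: assumes "i < l" "block_start mu i \<le> j" "j < block_start mu i + mu i"
  shows "blk l mu j = i"
  unfolding blk_def
proof (rule the_equality)
  show "i < l \<and> block_start mu i \<le> j \<and> j < block_start mu i + mu i" using assms by simp
  fix i' assume "i' < l \<and> block_start mu i' \<le> j \<and> j < block_start mu i' + mu i'"
  thus "i' = i" using block_unique[of mu i' j i] assms by blast
qed

lemma blk_props: assumes "j < block_start mu l"
  shows "blk l mu j < l" "block_start mu (blk l mu j) \<le> j" "j < block_start mu (blk l mu j) + mu (blk l mu j)"
proof -
  obtain i where i: "i < l" "block_start mu i \<le> j" "j < block_start mu i + mu i" using block_exists[OF assms] by blast
  hence "blk l mu j = i" by (rule blk_eq)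
  thus "blk l mu j < l" "block_start mu (blk l mu j) \<le> j" "j < block_start mu (blk l mu j) + mu (blk l mu j)"
    using i by auto
qed

lemma diag_entry_blk: "diag_entry l \<sigma> mu j = \<sigma> (blk l mu j)"
  unfolding diag_entry_def blk_def ..

lemma blk_card: assumes "i < l" shows "card {j. j < block_start mu l \<and> blk l mu j = i} = mu i"
proof -
  have "Suc i \<le> l" using assms by simp
  hence "block_start mu (Suc i) \<le> block_start mu l" by (rule bs_mono)
  hence le: "block_start mu i + mu i \<le> block_start mu l" unfolding bs_Suc .
  have "{j. j < block_start mu l \<and> blk l mu j = i} = {block_start mu i ..< block_start mu i + mu i}"
  proof -
    have "j < block_start mu l \<and> blk l mu j = i \<longleftrightarrow> j \<in> {block_start mu i ..< block_start mu i + mu i}" for j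
    proof
      assume "j < block_start mu l \<and> blk l mu j = i"
      thus "j \<in> {block_start mu i ..< block_start mu i + mu i}" using blk_props(2,3)[of j mu l] by auto
    next
      assume j: "j \<in> {block_start mu i ..< block_start mu i + mu i}"
      hence "blk l mu j = i" using blk_eq[OF assms, of mu j] by auto
      thus "j < block_start mu l \<and> blk l mu j = i" using j le by auto
    qed
    thus ?thesis by blast
  qed
  thus ?thesis by (simp only: card_atLeastLessThan)
qed

lemma dbm_entry: assumes "\<forall>i<length Ws. Ws ! i \<in> carrier_mat (mu i) (mu i)"
  shows "diag_block_mat Ws \<in> carrier_mat (block_start mu (length Ws)) (block_start mu (length Ws))
    \<and> (\<forall>i a b. i < length Ws \<longrightarrow> block_start mu i \<le> a \<longrightarrow> a < block_start mu i + mu i \<longrightarrow> b < block_start mu (length Ws) \<longrightarrow>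
       diag_block_mat Ws $$ (a,b) = (if block_start mu i \<le> b \<and> b < block_start mu i + mu i
          then Ws ! i $$ (a - block_start mu i, b - block_start mu i) else 0))"
  using assms
proof (induction Ws arbitrary: mu)
  case Nil
  show ?case by auto
next
  case (Cons W Ws)
  let ?mu = "\<lambda>i. mu (Suc i)"
  have W: "W \<in> carrier_mat (mu 0) (mu 0)" using Cons(2)[rule_format, of 0] by simp
  have "\<forall>i<length Ws. Ws ! i \<in> carrier_mat (?mu i) (?mu i)"
  proof (intro allI impI)
    fix i assume "i < length Ws" thus "Ws ! i \<in> carrier_mat (?mu i) (?mu i)" using Cons(2)[rule_format, of "Suc i"] by simp
  qed
  note IH = Cons(1)[OF this]
  let ?D = "diag_block_mat Ws"
  let ?N = "block_start ?mu (length Ws)"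
  have D: "?D \<in> carrier_mat ?N ?N" using IH by blast
  have eqD: "diag_block_mat (W # Ws) = four_block_mat W (0\<^sub>m (mu 0) ?N) (0\<^sub>m ?N (mu 0)) ?D"
    using W D by (simp add: Let_def)
  have len: "block_start mu (length (W # Ws)) = mu 0 + ?N" using bs_shift[of mu "length Ws"] by simp
  have dW[simp]: "dim_row W = mu 0" "dim_col W = mu 0" "dim_row ?D = ?N" "dim_col ?D = ?N" using W D by auto
  show ?case
  proof (intro conjI allI impI)
    show "diag_block_mat (W # Ws) \<in> carrier_mat (block_start mu (length (W # Ws))) (block_start mu (length (W # Ws)))"
      unfolding eqD len using W D by auto
  next
    fix i a b
    assume i: "i < length (W # Ws)" and a1: "block_start mu i \<le> a" and a2: "a < block_start mu i + mu i"
      and b: "b < block_start mu (length (W # Ws))"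
    have "Suc i \<le> length (W # Ws)" using i by simp
    hence "block_start mu (Suc i) \<le> block_start mu (length (W # Ws))" by (rule bs_mono)
    hence aN: "a < mu 0 + ?N" using a2 len unfolding bs_Suc by linarith
    show "diag_block_mat (W # Ws) $$ (a, b) = (if block_start mu i \<le> b \<and> b < block_start mu i + mu i
          then (W # Ws) ! i $$ (a - block_start mu i, b - block_start mu i) else 0)"
    proof (cases i)
      case 0
      have a0: "a < mu 0" using a2 0 by simp
      have entry: "four_block_mat W (0\<^sub>m (mu 0) ?N) (0\<^sub>m ?N (mu 0)) ?D $$ (a,b) =
         (if b < mu 0 then W $$ (a,b) else 0)"
        using aN b len a0 by (subst index_mat_four_block(1)) auto
      show ?thesis unfolding eqD entry using 0 by simp
    next
      case (Suc i')
      have bsi: "block_start mu i = mu 0 + block_start ?mu i'" using bs_shift[of mu i'] Suc by simp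
      have i': "i' < length Ws" using i Suc by simp
      have mui: "mu i = ?mu i'" using Suc by simp
      note a2 = a2[unfolded mui]
      have IHi: "?D $$ (a - mu 0, b - mu 0) = (if block_start ?mu i' \<le> b - mu 0 \<and> b - mu 0 < block_start ?mu i' + ?mu i'
          then Ws ! i' $$ (a - mu 0 - block_start ?mu i', b - mu 0 - block_start ?mu i') else 0)"
        if "b \<ge> mu 0" using IH i' a1 a2 b len bsi that by auto
      have a0: "\<not> a < mu 0" using a1 bsi by simp
      have entry: "four_block_mat W (0\<^sub>m (mu 0) ?N) (0\<^sub>m ?N (mu 0)) ?D $$ (a,b) =
         (if b < mu 0 then 0 else ?D $$ (a - mu 0, b - mu 0))"
        using aN b len a0 by (subst index_mat_four_block(1)) auto
      show ?thesis
      proof (cases "b < mu 0")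
        case True thus ?thesis unfolding eqD entry using bsi by simp
      next
        case False
        hence "?D $$ (a - mu 0, b - mu 0) = (if block_start ?mu i' \<le> b - mu 0 \<and> b - mu 0 < block_start ?mu i' + ?mu i'
          then Ws ! i' $$ (a - mu 0 - block_start ?mu i', b - mu 0 - block_start ?mu i') else 0)"
          using IHi by simp
        also have "\<dots> = (if block_start mu i \<le> b \<and> b < block_start mu i + mu i
          then (W # Ws) ! i $$ (a - block_start mu i, b - block_start mu i) else 0)"
        proof -
          have "(block_start ?mu i' \<le> b - mu 0 \<and> b - mu 0 < block_start ?mu i' + ?mu i') \<longleftrightarrow>
                (mu 0 + block_start ?mu i' \<le> b \<and> b < mu 0 + block_start ?mu i' + ?mu i')" using False by arith
          thus ?thesis unfolding bsi mui using Suc by (simp add: diff_diff_add)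
        qed
        finally show ?thesis unfolding eqD entry using False by simp
      qed
    qed
  qed
qed

lemma gram_left: assumes P: "(P::real mat) \<in> carrier_mat m m" and S: "S \<in> carrier_mat m n"
  and Q: "Q \<in> carrier_mat n n" and QQ: "transpose_mat Q * Q = 1\<^sub>m n"
  shows "(P * S * transpose_mat Q) * transpose_mat (P * S * transpose_mat Q) = P * (S * transpose_mat S) * transpose_mat P"
proof -
  have PS: "P * S \<in> carrier_mat m n" using P S by auto
  have T: "transpose_mat (P * S * transpose_mat Q) = Q * (transpose_mat S * transpose_mat P)"
    using transpose_mult[OF PS, of "transpose_mat Q" n] transpose_mult[OF P S] Q by simp
  have "(P * S * transpose_mat Q) * (Q * (transpose_mat S * transpose_mat P))
      = (P * S) * (transpose_mat Q * (Q * (transpose_mat S * transpose_mat P)))"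
    using PS Q S P by (intro assoc_mult_mat[of _ m n _ n _ m]) auto
  also have "transpose_mat Q * (Q * (transpose_mat S * transpose_mat P)) = (transpose_mat Q * Q) * (transpose_mat S * transpose_mat P)"
    using Q S P by (intro assoc_mult_mat[symmetric, of _ n n _ n _ m]) auto
  also have "\<dots> = transpose_mat S * transpose_mat P" using QQ S P by simp
  also have "(P * S) * (transpose_mat S * transpose_mat P) = P * (S * (transpose_mat S * transpose_mat P))"
    using P S by (intro assoc_mult_mat[of _ m m _ n _ m]) auto
  also have "S * (transpose_mat S * transpose_mat P) = (S * transpose_mat S) * transpose_mat P"
    using P S by (intro assoc_mult_mat[symmetric, of _ m n _ m _ m]) auto
  also have "P * ((S * transpose_mat S) * transpose_mat P) = P * (S * transpose_mat S) * transpose_mat P"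
    using P S by (intro assoc_mult_mat[symmetric, of _ m m _ m _ m]) auto
  finally show ?thesis unfolding T .
qed

lemma gram_right: assumes P: "(P::real mat) \<in> carrier_mat m m" and S: "S \<in> carrier_mat m n"
  and Q: "Q \<in> carrier_mat n n" and PP: "transpose_mat P * P = 1\<^sub>m m"
  shows "transpose_mat (P * S * transpose_mat Q) * (P * S * transpose_mat Q) = Q * (transpose_mat S * S) * transpose_mat Q"
proof -
  have PS: "P * S \<in> carrier_mat m n" using P S by auto
  have T: "transpose_mat (P * S * transpose_mat Q) = Q * (transpose_mat S * transpose_mat P)"
    using transpose_mult[OF PS, of "transpose_mat Q" n] transpose_mult[OF P S] Q by simp
  have "(Q * (transpose_mat S * transpose_mat P)) * (P * S * transpose_mat Q)
      = Q * ((transpose_mat S * transpose_mat P) * (P * S * transpose_mat Q))"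
    using PS Q S P by (intro assoc_mult_mat[of _ n n _ m _ n]) auto
  also have "(transpose_mat S * transpose_mat P) * (P * S * transpose_mat Q) = transpose_mat S * (transpose_mat P * (P * S * transpose_mat Q))"
    using Q S P by (intro assoc_mult_mat[of _ n m _ m _ n]) auto
  also have "transpose_mat P * (P * S * transpose_mat Q) = (transpose_mat P * (P * S)) * transpose_mat Q"
    using Q S P by (intro assoc_mult_mat[symmetric, of _ m m _ n _ n]) auto
  also have "transpose_mat P * (P * S) = (transpose_mat P * P) * S"
    using S P by (intro assoc_mult_mat[symmetric, of _ m m _ m _ n]) auto
  also have "\<dots> = S" using PP S by simp
  also have "transpose_mat S * (S * transpose_mat Q) = (transpose_mat S * S) * transpose_mat Q"
    using Q S by (intro assoc_mult_mat[symmetric, of _ n m _ n _ n]) auto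
  also have "Q * ((transpose_mat S * S) * transpose_mat Q) = Q * (transpose_mat S * S) * transpose_mat Q"
    using Q S by (intro assoc_mult_mat[symmetric, of _ n n _ n _ n]) auto
  finally show ?thesis unfolding T .
qed

lemma orth_matD: assumes "orth_mat k U"
  shows "U \<in> carrier_mat k k" "U * transpose_mat U = 1\<^sub>m k" "transpose_mat U * U = 1\<^sub>m k"
  using assms unfolding orth_mat_def by auto

lemma backward:
  fixes A B U1 U2 V S :: "real mat" and W :: "nat \<Rightarrow> real mat"
  assumes A: "A \<in> carrier_mat m n" and B: "B \<in> carrier_mat m n"
    and fits: "\<And>j. n \<le> j \<Longrightarrow> j < m \<Longrightarrow> diag_entry l \<sigma> mu j = 0"
    and U1: "orth_mat m U1" and U2: "orth_mat m U2" and V: "orth_mat n V"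
    and S: "rect_diag_mat m n (diag_entry l \<sigma> mu) S"
    and eA: "A = U1 * S * transpose_mat V" and eB: "B = U2 * S * transpose_mat V"
    and W: "\<forall>i<l. orth_mat (mu i) (W i)" and eU: "U1 = U2 * diag_block_mat (map W [0..<l])"
  shows "A * transpose_mat A = B * transpose_mat B \<and> transpose_mat A * A = transpose_mat B * B"
proof -
  define d where "d = diag_entry l \<sigma> mu"
  define D where "D = diag_block_mat (map W [0..<l])"
  note U1c = orth_matD[OF U1] and U2c = orth_matD[OF U2] and Vc = orth_matD[OF V]
  have Sc: "S \<in> carrier_mat m n" and Se: "\<And>i j. i < m \<Longrightarrow> j < n \<Longrightarrow> S $$ (i,j) = (if i = j then d i else 0)"
    using S unfolding rect_diag_mat_def d_def by auto
  have "\<forall>i<length (map W [0..<l]). map W [0..<l] ! i \<in> carrier_mat (mu i) (mu i)"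
    using W orth_matD(1) by auto
  note dbm = dbm_entry[OF this, unfolded length_map length_upt, simplified]
  have Dc0: "D \<in> carrier_mat (block_start mu l) (block_start mu l)" using dbm unfolding D_def by auto
  have "dim_col U1 = m" using U1c by auto
  hence bsl: "block_start mu l = m" using eU Dc0 unfolding D_def by auto
  have Dc: "D \<in> carrier_mat m m" using Dc0 bsl by simp
  have Dentry: "D $$ (a,b) = (if block_start mu i \<le> b \<and> b < block_start mu i + mu i
          then W i $$ (a - block_start mu i, b - block_start mu i) else 0)"
    if "i < l" "block_start mu i \<le> a" "a < block_start mu i + mu i" "b < m" for i a b
    using dbm that bsl unfolding D_def by auto
  have eU': "U1 = U2 * D" using eU unfolding D_def .
  have DU: "D = transpose_mat U2 * U1"
  proof -
    have "transpose_mat U2 * U1 = (transpose_mat U2 * U2) * D" unfolding eU'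
      using U2c Dc by (intro assoc_mult_mat[symmetric, of _ m m _ m _ m]) auto
    thus ?thesis using U2c Dc by simp
  qed
  have DDT: "D * transpose_mat D = 1\<^sub>m m"
  proof -
    have "D * transpose_mat D = (transpose_mat U2 * U1) * (transpose_mat U1 * U2)"
      unfolding DU using transpose_mult[of "transpose_mat U2" m m U1 m] U1c U2c by simp
    also have "\<dots> = transpose_mat U2 * (U1 * (transpose_mat U1 * U2))"
      using U1c U2c by (intro assoc_mult_mat[of _ m m _ m _ m]) auto
    also have "U1 * (transpose_mat U1 * U2) = (U1 * transpose_mat U1) * U2"
      using U1c U2c by (intro assoc_mult_mat[symmetric, of _ m m _ m _ m]) auto
    finally show ?thesis using U1c U2c by simp
  qed
  define L where "L = S * transpose_mat S"
  have Lc: "L \<in> carrier_mat m m" unfolding L_def using Sc by auto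
  have Le: "L $$ (a,b) = (if a = b then d a * d a else 0)" if ab: "a < m" "b < m" for a b
  proof -
    have "L $$ (a,b) = (\<Sum>k\<in>{0..<n}. S $$ (a,k) * S $$ (b,k))"
      unfolding L_def using Sc ab by (simp add: scalar_prod_def)
    also have "\<dots> = (\<Sum>k\<in>{0..<n}. if k = a then (if a = b then d a * d a else 0) else 0)"
      using ab by (intro sum.cong refl) (auto simp: Se)
    also have "\<dots> = (if a < n then (if a = b then d a * d a else 0) else 0)"
      by (simp add: sum.delta')
    also have "\<dots> = (if a = b then d a * d a else 0)" using fits[of a] ab unfolding d_def by auto
    finally show ?thesis .
  qed
  have blkD: "D $$ (a,b) = 0 \<or> d a = d b" if ab: "a < m" "b < m" for a b
  proof -
    let ?i = "blk l mu a"
    note bp = blk_props[of a mu l, unfolded bsl, OF ab(1)]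
    have "D $$ (a,b) = (if block_start mu ?i \<le> b \<and> b < block_start mu ?i + mu ?i
          then W ?i $$ (a - block_start mu ?i, b - block_start mu ?i) else 0)"
      using Dentry[OF bp ab(2)] .
    moreover have "blk l mu b = ?i" if "block_start mu ?i \<le> b" "b < block_start mu ?i + mu ?i"
      using blk_eq[OF bp(1) that] .
    ultimately show ?thesis unfolding d_def diag_entry_blk by auto
  qed
  have DL: "D * L = L * D"
  proof (rule eq_matI)
    fix a b assume "a < dim_row (L * D)" "b < dim_col (L * D)"
    hence ab: "a < m" "b < m" using Lc Dc by auto
    have "(D * L) $$ (a,b) = (\<Sum>c\<in>{0..<m}. D $$ (a,c) * L $$ (c,b))"
      using ab Dc Lc by (simp add: scalar_prod_def)
    also have "\<dots> = (\<Sum>c\<in>{0..<m}. if c = b then D $$ (a,b) * (d b * d b) else 0)"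
      using ab by (intro sum.cong refl) (auto simp: Le)
    also have "\<dots> = D $$ (a,b) * (d b * d b)" using ab by (simp add: sum.delta')
    also have "\<dots> = (d a * d a) * D $$ (a,b)" using blkD[OF ab] by auto
    also have "\<dots> = (\<Sum>c\<in>{0..<m}. if c = a then (d a * d a) * D $$ (a,b) else 0)" using ab by (simp add: sum.delta')
    also have "\<dots> = (\<Sum>c\<in>{0..<m}. L $$ (a,c) * D $$ (c,b))"
      using ab by (intro sum.cong refl) (auto simp: Le)
    also have "\<dots> = (L * D) $$ (a,b)" using ab Dc Lc by (simp add: scalar_prod_def)
    finally show "(D * L) $$ (a,b) = (L * D) $$ (a,b)" .
  qed (use Lc Dc in auto)
  have DS: "D * S \<in> carrier_mat m n" using Dc Sc by auto
  have "(D * S) * transpose_mat (D * S) = D * L * transpose_mat D"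
    using gram_left[OF Dc Sc one_carrier_mat[of n]] Sc unfolding L_def by simp
  also have "\<dots> = L * D * transpose_mat D" unfolding DL ..
  also have "\<dots> = L * (D * transpose_mat D)" using Lc Dc by (intro assoc_mult_mat[of _ m m _ m _ m]) auto
  also have "\<dots> = L" using DDT Lc by simp
  finally have DSL: "(D * S) * transpose_mat (D * S) = L" .
  have eA': "A = U2 * (D * S) * transpose_mat V"
    unfolding eA eU' using U2c Dc Sc by (subst assoc_mult_mat[of _ m m _ m _ n]) auto
  have "A * transpose_mat A = U2 * L * transpose_mat U2"
    unfolding eA' using gram_left[OF U2c(1) DS Vc(1) Vc(3)] DSL by simp
  moreover have "B * transpose_mat B = U2 * L * transpose_mat U2"
    unfolding eB L_def using gram_left[OF U2c(1) Sc Vc(1) Vc(3)] by simp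
  moreover have "transpose_mat A * A = V * (transpose_mat S * S) * transpose_mat V"
    unfolding eA using gram_right[OF U1c(1) Sc Vc(1) U1c(3)] .
  moreover have "transpose_mat B * B = V * (transpose_mat S * S) * transpose_mat V"
    unfolding eB using gram_right[OF U2c(1) Sc Vc(1) U2c(3)] .
  ultimately show ?thesis by simp
qed

lemma count_mset_map_upt: "count (mset (map f [0..<m])) c = card {j. j < m \<and> f j = c}"
proof (induction m)
  case 0 thus ?case by simp
next
  case (Suc m)
  have eq: "{j. j < Suc m \<and> f j = c} = {j. j < m \<and> f j = c} \<union> (if f m = c then {m} else {})" by (auto simp: less_Suc_eq)
  have "card {j. j < Suc m \<and> f j = c} = card {j. j < m \<and> f j = c} + (if f m = c then 1 else 0)"
    unfolding eq by (auto simp: card_insert_if)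
  thus ?case using Suc by simp
qed

lemma decomp_from_cols:
  assumes X: "(X::real mat) \<in> carrier_mat m n" and u: "onb m {..<m} u" and v: "onb n {..<n} v"
    and Xv: "\<And>k. k < n \<Longrightarrow> X *\<^sub>v v k = (if k < m then d k \<cdot>\<^sub>v u k else 0\<^sub>v m)"
  shows "X = colmat m m u * mat m n (\<lambda>(i,j). if i = j then d i else 0) * transpose_mat (colmat n n v)"
proof -
  let ?U = "colmat m m u" and ?V = "colmat n n v" and ?S = "mat m n (\<lambda>(i,j). if i = j then d i else 0)"
  have uc: "u k \<in> carrier_vec m" if "k < m" for k using u that unfolding onb_def by auto
  have vc: "v k \<in> carrier_vec n" if "k < n" for k using v that unfolding onb_def by auto
  have XV: "X * ?V = ?U * ?S"
  proof (rule eq_matI)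
    fix i k assume "i < dim_row (?U * ?S)" "k < dim_col (?U * ?S)"
    hence ik: "i < m" "k < n" by auto
    have "(X * ?V) $$ (i,k) = (X *\<^sub>v v k) $ i" using ik X vc by (simp add: col_colmat)
    also have "\<dots> = (if k < m then d k * u k $ i else 0)"
    proof (cases "k < m")
      case True
      have "dim_vec (u k) = m" using uc[OF True] by auto
      thus ?thesis using Xv[OF ik(2)] ik True by simp
    qed (use Xv[OF ik(2)] ik in auto)
    also have "\<dots> = (\<Sum>j\<in>{0..<m}. u j $ i * ?S $$ (j,k))"
    proof -
      have "(\<Sum>j\<in>{0..<m}. u j $ i * ?S $$ (j,k)) = (\<Sum>j\<in>{0..<m}. if j = k then u k $ i * d k else 0)"
        using ik by (intro sum.cong refl) auto
      also have "\<dots> = (if k < m then d k * u k $ i else 0)" by (simp add: sum.delta')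
      finally show ?thesis by simp
    qed
    also have "\<dots> = (?U * ?S) $$ (i,k)" using ik by (simp add: scalar_prod_def colmat_def)
    finally show "(X * ?V) $$ (i,k) = (?U * ?S) $$ (i,k)" .
  qed (use X in auto)
  have VV: "?V * transpose_mat ?V = 1\<^sub>m n" using orth_matD[OF onb_orth[OF v]] by simp
  have "X = X * (?V * transpose_mat ?V)" using VV X by simp
  also have "\<dots> = (X * ?V) * transpose_mat ?V" using X by (intro assoc_mult_mat[symmetric, of _ m n _ n _ n]) auto
  finally show ?thesis unfolding XV .
qed

lemma orth_prod: assumes "orth_mat m U1" "orth_mat m U2" shows "orth_mat m (transpose_mat U2 * U1)"
proof -
  note U1c = orth_matD[OF assms(1)] and U2c = orth_matD[OF assms(2)]
  let ?D = "transpose_mat U2 * U1"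
  have Dc: "?D \<in> carrier_mat m m" using U1c U2c by auto
  have "?D * transpose_mat ?D = (transpose_mat U2 * U1) * (transpose_mat U1 * U2)"
    using transpose_mult[of "transpose_mat U2" m m U1 m] U1c U2c by simp
  also have "\<dots> = transpose_mat U2 * (U1 * (transpose_mat U1 * U2))"
    using U1c U2c by (intro assoc_mult_mat[of _ m m _ m _ m]) auto
  also have "U1 * (transpose_mat U1 * U2) = (U1 * transpose_mat U1) * U2"
    using U1c U2c by (intro assoc_mult_mat[symmetric, of _ m m _ m _ m]) auto
  finally have 1: "?D * transpose_mat ?D = 1\<^sub>m m" using U1c U2c by simp
  have 2: "transpose_mat ?D * ?D = 1\<^sub>m m" by (rule mat_mult_left_right_inverse[OF Dc _ 1]) (use Dc in auto)
  show ?thesis unfolding orth_mat_def using Dc 1 2 by auto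
qed

lemma zero_smult_rvec: "(v::real vec) \<in> carrier_vec n \<Longrightarrow> 0 \<cdot>\<^sub>v v = 0\<^sub>v n"
  by (intro eq_vecI) auto

lemma forward:
  fixes A B :: "real mat" and m n l :: nat and \<sigma> :: "nat \<Rightarrow> real" and mu :: "nat \<Rightarrow> nat"
  assumes A: "A \<in> carrier_mat m n" and B: "B \<in> carrier_mat m n"
    and distinct: "inj_on \<sigma> {..<l}"
    and all_sv: "\<sigma> ` {..<l} = {s. singular_value A s}"
    and mu: "\<And>i. i < l \<Longrightarrow> mu i = sv_mult A (\<sigma> i)"
    and fits: "\<And>j. n \<le> j \<Longrightarrow> j < m \<Longrightarrow> diag_entry l \<sigma> mu j = 0"
    and PAB: "A * transpose_mat A = B * transpose_mat B"
    and QAB: "transpose_mat A * A = transpose_mat B * B"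
  shows "\<exists>U1 U2 V S W. orth_mat m U1 \<and> orth_mat m U2 \<and> orth_mat n V \<and>
            rect_diag_mat m n (diag_entry l \<sigma> mu) S \<and>
            A = U1 * S * transpose_mat V \<and> B = U2 * S * transpose_mat V \<and>
            (\<forall>i<l. orth_mat (mu i) (W i)) \<and>
            U1 = U2 * diag_block_mat (map W [0..<l])"
proof -
  define P where "P = A * transpose_mat A"
  define d where "d = diag_entry l \<sigma> mu"
  define bs where "bs = block_start mu"
  have Pc: "P \<in> carrier_mat m m" unfolding P_def using A by auto
  have Psym: "transpose_mat P = P" unfolding P_def using transpose_mult[OF A, of "transpose_mat A" m] A by simp
  have Pv: "P *\<^sub>v x = A *\<^sub>v (transpose_mat A *\<^sub>v x)" if "x \<in> carrier_vec m" for x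
    unfolding P_def using A that by (intro assoc_mult_mat_vec) auto
  have PvB: "P *\<^sub>v x = B *\<^sub>v (transpose_mat B *\<^sub>v x)" if "x \<in> carrier_vec m" for x
    unfolding P_def PAB using B that by (intro assoc_mult_mat_vec) auto
  have QvB: "transpose_mat A *\<^sub>v (A *\<^sub>v x) = transpose_mat B *\<^sub>v (B *\<^sub>v x)" if "x \<in> carrier_vec n" for x
  proof -
    have "transpose_mat A *\<^sub>v (A *\<^sub>v x) = (transpose_mat A * A) *\<^sub>v x" using A that by (intro assoc_mult_mat_vec[symmetric]) auto
    also have "\<dots> = (transpose_mat B * B) *\<^sub>v x" unfolding QAB ..
    also have "\<dots> = transpose_mat B *\<^sub>v (B *\<^sub>v x)" using B that by (intro assoc_mult_mat_vec) auto
    finally show ?thesis .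
  qed
  have Psp: "x \<bullet> (P *\<^sub>v y) = (P *\<^sub>v x) \<bullet> y" if "x \<in> carrier_vec m" "y \<in> carrier_vec m" for x y
    using mat_vec_sp[OF Pc that] Psym by simp
  have sv: "\<sigma> i \<ge> 0" "eigenvalue P ((\<sigma> i)\<^sup>2)" if "i < l" for i
  proof -
    have "singular_value A (\<sigma> i)" using all_sv that by auto
    thus "\<sigma> i \<ge> 0" "eigenvalue P ((\<sigma> i)\<^sup>2)" unfolding singular_value_def P_def by auto
  qed
  have sq_inj: "i = i'" if "i < l" "i' < l" "(\<sigma> i)\<^sup>2 = (\<sigma> i')\<^sup>2" for i i'
  proof -
    have "\<sigma> i = \<sigma> i'" using that sv(1)[of i] sv(1)[of i'] by (simp add: power2_eq_iff_nonneg)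
    thus ?thesis using distinct that by (auto dest: inj_onD)
  qed
  obtain e lam where e: "onb m {..<m} e" and ev: "\<And>j. j < m \<Longrightarrow> P *\<^sub>v e j = lam j \<cdot>\<^sub>v e j"
    using spectral[OF Pc Psym] by blast
  have ec: "e j \<in> carrier_vec m" if "j < m" for j using e that unfolding onb_def by auto
  have ee: "e j \<bullet> e j = 1" if "j < m" for j using e that unfolding onb_def by auto
  have lam_nonneg: "lam j \<ge> 0" if j: "j < m" for j
  proof -
    have "lam j = e j \<bullet> (P *\<^sub>v e j)" using ev[OF j] ee[OF j] ec[OF j] by simp
    also have "\<dots> = (transpose_mat A *\<^sub>v e j) \<bullet> (transpose_mat A *\<^sub>v e j)"
      unfolding Pv[OF ec[OF j]] by (rule mat_vec_sp[OF A ec[OF j]]) (use A ec[OF j] in auto)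
    finally show ?thesis using sp_self_nonneg by simp
  qed
  have lam_sv: "\<exists>i<l. lam j = (\<sigma> i)\<^sup>2" if j: "j < m" for j
  proof -
    have "e j \<noteq> 0\<^sub>v m" using ee[OF j] ec[OF j] by auto
    hence "eigenvalue P (lam j)" unfolding eigenvalue_def eigenvector_def using ec[OF j] ev[OF j] Pc by auto
    hence "singular_value A (sqrt (lam j))" unfolding singular_value_def P_def using lam_nonneg[OF j] by simp
    then obtain i where "i < l" "\<sigma> i = sqrt (lam j)" using all_sv by (metis (mono_tags) imageE lessThan_iff mem_Collect_eq)
    thus ?thesis using lam_nonneg[OF j] by auto
  qed
  define E where "E = colmat m m e"
  define Dg where "Dg = mat m m (\<lambda>(i,j). if i = j then lam i else 0)"
  have Eo: "orth_mat m E" unfolding E_def by (rule onb_orth[OF e])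
  note Ec = orth_matD[OF Eo]
  have Dgc: "Dg \<in> carrier_mat m m" unfolding Dg_def by auto
  have PE: "P * E = E * Dg"
  proof (rule eq_matI)
    fix i j assume "i < dim_row (E * Dg)" "j < dim_col (E * Dg)"
    hence ij: "i < m" "j < m" using Ec Dgc by auto
    have "(P * E) $$ (i,j) = (P *\<^sub>v e j) $ i" using ij Pc by (simp add: E_def col_colmat ec)
    also have "\<dots> = lam j * e j $ i" using ev[OF ij(2)] ij ec[OF ij(2)] by simp
    also have "\<dots> = (\<Sum>k\<in>{0..<m}. e k $ i * Dg $$ (k,j))"
    proof -
      have "(\<Sum>k\<in>{0..<m}. e k $ i * Dg $$ (k,j)) = (\<Sum>k\<in>{0..<m}. if k = j then e j $ i * lam j else 0)"
        using ij unfolding Dg_def by (intro sum.cong refl) auto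
      also have "\<dots> = lam j * e j $ i" using ij by (simp add: sum.delta')
      finally show ?thesis by simp
    qed
    also have "\<dots> = (E * Dg) $$ (i,j)" using ij Dgc by (simp add: scalar_prod_def E_def colmat_def)
    finally show "(P * E) $$ (i,j) = (E * Dg) $$ (i,j)" .
  qed (use Pc Ec Dgc in auto)
  have PEDE: "P = E * Dg * transpose_mat E"
  proof -
    have "P = P * (E * transpose_mat E)" using Ec Pc by simp
    also have "\<dots> = (P * E) * transpose_mat E" using Ec Pc by (intro assoc_mult_mat[symmetric, of _ m m _ m _ m]) auto
    finally show ?thesis unfolding PE .
  qed
  have "similar_mat P Dg"
    by (rule similar_matI[of _ _ E "transpose_mat E" m]) (use Pc Dgc Ec PEDE in auto)
  hence "char_poly P = char_poly Dg" by (rule char_poly_similar)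
  also have "\<dots> = (\<Prod>a\<leftarrow>diag_mat Dg. [:- a, 1:])"
    by (rule char_poly_upper_triangular[OF Dgc]) (auto simp: upper_triangular_def Dg_def)
  also have "diag_mat Dg = map lam [0..<m]" unfolding diag_mat_def Dg_def by auto
  finally have cp: "char_poly P = (\<Prod>a\<leftarrow>map lam [0..<m]. [:- a, 1:])" .
  have mu_card: "mu i = card {j. j < m \<and> lam j = (\<sigma> i)\<^sup>2}" if i: "i < l" for i
  proof -
    have "mu i = order ((\<sigma> i)\<^sup>2) (char_poly P)" using mu[OF i] unfolding sv_mult_def P_def by simp
    also have "\<dots> = sum_list (map (\<lambda>j. if lam j = (\<sigma> i)\<^sup>2 then 1 else 0) [0..<m])"
      unfolding cp by (subst order_prod_list) (auto simp: o_def order_linear')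
    also have "\<dots> = (\<Sum>j = 0..<m. if lam j = (\<sigma> i)\<^sup>2 then 1 else 0)"
      by (subst sum_set_upt_conv_sum_list_nat[symmetric]) simp
    also have "\<dots> = card {j. j < m \<and> lam j = (\<sigma> i)\<^sup>2}"
      by (simp add: sum.If_cases atLeast0LessThan lessThan_def Collect_conj_eq Int_commute)
    finally show ?thesis .
  qed
  have bsl: "bs l = m"
  proof -
    have "bs l = (\<Sum>i<l. card {j. j < m \<and> lam j = (\<sigma> i)\<^sup>2})" unfolding bs_def block_start_def
      using mu_card by simp
    also have "\<dots> = card (\<Union>i<l. {j. j < m \<and> lam j = (\<sigma> i)\<^sup>2})"
    proof (rule card_UN_disjoint[symmetric])
      show "\<forall>i\<in>{..<l}. \<forall>i'\<in>{..<l}. i \<noteq> i' \<longrightarrow> {j. j < m \<and> lam j = (\<sigma> i)\<^sup>2} \<inter> {j. j < m \<and> lam j = (\<sigma> i')\<^sup>2} = {}"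
      proof (intro ballI impI)
        fix i i' assume ii: "i \<in> {..<l}" "i' \<in> {..<l}" "i \<noteq> i'"
        show "{j. j < m \<and> lam j = (\<sigma> i)\<^sup>2} \<inter> {j. j < m \<and> lam j = (\<sigma> i')\<^sup>2} = {}"
        proof (rule ccontr)
          assume "\<not> ?thesis"
          then obtain j where "lam j = (\<sigma> i)\<^sup>2" "lam j = (\<sigma> i')\<^sup>2" by blast
          hence "(\<sigma> i)\<^sup>2 = (\<sigma> i')\<^sup>2" by simp
          thus False using sq_inj[of i i'] ii by simp
        qed
      qed
    qed auto
    also have "(\<Union>i<l. {j. j < m \<and> lam j = (\<sigma> i)\<^sup>2}) = {..<m}" using lam_sv by auto
    finally show ?thesis by simp
  qed
  have d_blk: "d j = \<sigma> (blk l mu j)" for j unfolding d_def diag_entry_blk ..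
  have bp: "blk l mu j < l" "bs (blk l mu j) \<le> j" "j < bs (blk l mu j) + mu (blk l mu j)" if "j < m" for j
    using blk_props[of j mu l] that bsl unfolding bs_def by auto
  have d_nonneg: "d j \<ge> 0" if "j < m" for j using sv(1)[OF bp(1)[OF that]] d_blk by simp
  have "mset (map (\<lambda>j. (d j)\<^sup>2) [0..<m]) = mset (map lam [0..<m])"
  proof (rule multiset_eqI)
    fix c
    show "count (mset (map (\<lambda>j. (d j)\<^sup>2) [0..<m])) c = count (mset (map lam [0..<m])) c"
      unfolding count_mset_map_upt
    proof (cases "\<exists>i<l. c = (\<sigma> i)\<^sup>2")
      case True
      then obtain i where i: "i < l" "c = (\<sigma> i)\<^sup>2" by auto
      have "j < m \<and> (d j)\<^sup>2 = c \<longleftrightarrow> j < bs l \<and> blk l mu j = i" for j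
      proof
        assume j: "j < m \<and> (d j)\<^sup>2 = c"
        hence "(\<sigma> (blk l mu j))\<^sup>2 = (\<sigma> i)\<^sup>2" using i d_blk by simp
        hence "blk l mu j = i" using sq_inj[OF bp(1) i(1)] j by simp
        thus "j < bs l \<and> blk l mu j = i" using j bsl by simp
      next
        assume "j < bs l \<and> blk l mu j = i"
        thus "j < m \<and> (d j)\<^sup>2 = c" using i d_blk bsl by simp
      qed
      hence "{j. j < m \<and> (d j)\<^sup>2 = c} = {j. j < bs l \<and> blk l mu j = i}" by blast
      hence "card {j. j < m \<and> (d j)\<^sup>2 = c} = mu i" using blk_card[OF i(1), of mu] unfolding bs_def by simp
      thus "card {j. j < m \<and> (d j)\<^sup>2 = c} = card {j. j < m \<and> lam j = c}" using mu_card[OF i(1)] i by simp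
    next
      case False
      have "{j. j < m \<and> (d j)\<^sup>2 = c} = {}"
      proof -
        have "(d j)\<^sup>2 \<noteq> c" if "j < m" for j using False bp(1)[OF that] d_blk[of j] by metis
        thus ?thesis by blast
      qed
      moreover have "{j. j < m \<and> lam j = c} = {}"
      proof -
        have "lam j \<noteq> c" if "j < m" for j using False lam_sv[OF that] by metis
        thus ?thesis by blast
      qed
      ultimately show "card {j. j < m \<and> (d j)\<^sup>2 = c} = card {j. j < m \<and> lam j = c}" by (metis card.empty)
    qed
  qed
  then obtain p where p: "p permutes {..<m}" and pl: "permute_list p (map lam [0..<m]) = map (\<lambda>j. (d j)\<^sup>2) [0..<m]"
    by (rule mset_eq_permutation) simp
  have pm: "p j < m" if "j < m" for j using permutes_in_image[OF p, of j] that by simp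
  have lam_p: "lam (p j) = (d j)\<^sup>2" if j: "j < m" for j
  proof -
    have "permute_list p (map lam [0..<m]) ! j = lam (p j)" using j pm[OF j] by (simp add: permute_list_def)
    thus ?thesis using pl j by simp
  qed
  define u1 where "u1 = (\<lambda>j. e (p j))"
  have u1: "onb m {..<m} u1"
    using e pm permutes_inj[OF p] unfolding onb_def u1_def by (auto dest: injD)
  have u1c: "u1 j \<in> carrier_vec m" if "j < m" for j using u1 that unfolding onb_def by auto
  have u1u1: "u1 j \<bullet> u1 k = (if j = k then 1 else 0)" if "j < m" "k < m" for j k using u1 that unfolding onb_def by auto
  have Pu1: "P *\<^sub>v u1 j = (d j)\<^sup>2 \<cdot>\<^sub>v u1 j" if "j < m" for j
    unfolding u1_def using ev[OF pm[OF that]] lam_p[OF that] by simp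
  define c where "c = (\<lambda>j. transpose_mat A *\<^sub>v u1 j)"
  have cc: "c j \<in> carrier_vec n" if "j < m" for j unfolding c_def using A u1c[OF that] by auto
  have Ac: "A *\<^sub>v c k = (d k)\<^sup>2 \<cdot>\<^sub>v u1 k" if "k < m" for k
    unfolding c_def using Pv[OF u1c[OF that]] Pu1[OF that] by simp
  have ccsp: "c j \<bullet> c k = (if j = k then (d j)\<^sup>2 else 0)" if jk: "j < m" "k < m" for j k
  proof -
    have "c j \<bullet> c k = (transpose_mat A *\<^sub>v u1 j) \<bullet> c k" by (simp add: c_def)
    also have "\<dots> = u1 j \<bullet> (A *\<^sub>v c k)"
      by (rule transpose_vec_mult_scalar[OF A cc[OF jk(2)] u1c[OF jk(1)]])
    also have "\<dots> = (d k)\<^sup>2 * (u1 j \<bullet> u1 k)" using Ac[OF jk(2)] u1c[OF jk(1)] u1c[OF jk(2)] by simp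
    finally show ?thesis using u1u1[OF jk] by auto
  qed
  define J where "J = {j. j < m \<and> j < n \<and> d j \<noteq> 0}"
  have dJ: "d j = 0" if "j < m" "j \<notin> J" for j using that fits[of j] unfolding J_def d_def by (cases "j < n") auto
  define v0 where "v0 = (\<lambda>j. (1 / d j) \<cdot>\<^sub>v c j)"
  have v0: "onb n J v0" unfolding onb_def
  proof (intro conjI ballI)
    fix j assume "j \<in> J" thus "v0 j \<in> carrier_vec n" unfolding v0_def J_def using cc by auto
  next
    fix j k assume j: "j \<in> J" and k: "k \<in> J"
    hence jk: "j < m" "k < m" "d j \<noteq> 0" "d k \<noteq> 0" unfolding J_def by auto
    have "v0 j \<bullet> v0 k = (1 / d j) * ((1 / d k) * (c j \<bullet> c k))" unfolding v0_def using cc[OF jk(1)] cc[OF jk(2)] by simp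
    also have "\<dots> = (if j = k then 1 else 0)" using ccsp[OF jk(1,2)] jk by (simp add: power2_eq_square)
    finally show "v0 j \<bullet> v0 k = (if j = k then 1 else 0)" .
  qed
  obtain v where v: "onb n {..<n} v" and vJ: "\<forall>j\<in>J. v j = v0 j"
    using onb_extend[OF _ v0] unfolding J_def by blast
  have vc: "v k \<in> carrier_vec n" if "k < n" for k using v that unfolding onb_def by auto
  have vv: "v j \<bullet> v k = (if j = k then 1 else 0)" if "j < n" "k < n" for j k using v that unfolding onb_def by auto
  have cv: "c j = d j \<cdot>\<^sub>v v j" if "j \<in> J" for j
  proof -
    have "d j \<noteq> 0" "j < m" using that unfolding J_def by auto
    thus ?thesis using vJ that unfolding v0_def by (simp add: smult_smult_assoc)
  qed
  have c0: "c j = 0\<^sub>v n" if "j < m" "j \<notin> J" for j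
  proof -
    have "c j \<bullet> c j = 0" using ccsp[of j j] that dJ[OF that] by simp
    from sp_self_zero[OF this] show ?thesis using cc[OF that(1)] by auto
  qed
  have Av: "A *\<^sub>v v k = (if k < m then d k \<cdot>\<^sub>v u1 k else 0\<^sub>v m)" if k: "k < n" for k
  proof (rule onb_vec_eq[OF u1])
    show "A *\<^sub>v v k \<in> carrier_vec m" using A vc[OF k] by auto
    show "(if k < m then d k \<cdot>\<^sub>v u1 k else 0\<^sub>v m) \<in> carrier_vec m" using u1c by auto
    fix j assume j: "j < m"
    have "u1 j \<bullet> (A *\<^sub>v v k) = c j \<bullet> v k" unfolding c_def by (rule mat_vec_sp[OF A u1c[OF j] vc[OF k]])
    also have "\<dots> = (if j = k then d j else 0)"
    proof (cases "j \<in> J")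
      case True
      hence "j < n" unfolding J_def by auto
      thus ?thesis unfolding cv[OF True] using vc[OF k] vc[OF \<open>j < n\<close>] k vv[of j k] by simp
    next
      case False
      thus ?thesis using c0[OF j False] dJ[OF j False] vc[OF k] by auto
    qed
    also have "\<dots> = u1 j \<bullet> (if k < m then d k \<cdot>\<^sub>v u1 k else 0\<^sub>v m)"
    proof (cases "k < m")
      case True thus ?thesis using u1c[OF j] u1c[OF True] u1u1[of j k] j by auto
    qed (use u1c[OF j] j in auto)
    finally show "u1 j \<bullet> (A *\<^sub>v v k) = u1 j \<bullet> (if k < m then d k \<cdot>\<^sub>v u1 k else 0\<^sub>v m)" .
  qed
  have decA: "A = colmat m m u1 * mat m n (\<lambda>(i,j). if i = j then d i else 0) * transpose_mat (colmat n n v)"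
    by (rule decomp_from_cols[OF A u1 v Av])
  have Bsp: "(B *\<^sub>v x) \<bullet> (B *\<^sub>v y) = (A *\<^sub>v x) \<bullet> (A *\<^sub>v y)" if xy: "x \<in> carrier_vec n" "y \<in> carrier_vec n" for x y
  proof -
    have "(B *\<^sub>v x) \<bullet> (B *\<^sub>v y) = (transpose_mat B *\<^sub>v (B *\<^sub>v x)) \<bullet> y"
      by (rule transpose_vec_mult_scalar[OF B xy(2), symmetric]) (use B xy in auto)
    also have "\<dots> = (transpose_mat A *\<^sub>v (A *\<^sub>v x)) \<bullet> y" using QvB[OF xy(1)] by simp
    also have "\<dots> = (A *\<^sub>v x) \<bullet> (A *\<^sub>v y)"
      by (rule transpose_vec_mult_scalar[OF A xy(2)]) (use A xy in auto)
    finally show ?thesis .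
  qed
  have BTsp: "(transpose_mat B *\<^sub>v x) \<bullet> (transpose_mat B *\<^sub>v x) = x \<bullet> (P *\<^sub>v x)" if x: "x \<in> carrier_vec m" for x
    unfolding PvB[OF x] by (rule transpose_vec_mult_scalar[OF B _ x]) (use B x in auto)
  have AvJ: "A *\<^sub>v v k = d k \<cdot>\<^sub>v u1 k" if "k \<in> J" for k using Av[of k] that unfolding J_def by auto
  have AvJ0: "A *\<^sub>v v k = 0\<^sub>v m" if k: "k < n" "k \<notin> J" for k
  proof (cases "k < m")
    case True thus ?thesis using Av[OF k(1)] dJ[OF True k(2)] zero_smult_rvec[OF u1c[OF True]] by simp
  qed (use Av[OF k(1)] in simp)
  have Bv0: "B *\<^sub>v v k = 0\<^sub>v m" if k: "k < n" "k \<notin> J" for k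
  proof -
    have "(B *\<^sub>v v k) \<bullet> (B *\<^sub>v v k) = 0" unfolding Bsp[OF vc[OF k(1)] vc[OF k(1)]] AvJ0[OF k] by simp
    from sp_self_zero[OF this] show ?thesis using B by simp
  qed
  have BTz: "transpose_mat B *\<^sub>v u1 k = 0\<^sub>v n" if k: "k < m" "k \<notin> J" for k
  proof -
    have "(transpose_mat B *\<^sub>v u1 k) \<bullet> (transpose_mat B *\<^sub>v u1 k) = 0"
      unfolding BTsp[OF u1c[OF k(1)]] Pu1[OF k(1)] dJ[OF k] using u1c[OF k(1)] by simp
    from sp_self_zero[OF this] show ?thesis using B by simp
  qed
  have Jm: "j < m" "j < n" "d j \<noteq> 0" if "j \<in> J" for j using that unfolding J_def by auto
  define u2 where "u2 = (\<lambda>j. if j \<in> J then (1 / d j) \<cdot>\<^sub>v (B *\<^sub>v v j) else u1 j)"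
  have u2c: "u2 j \<in> carrier_vec m" if "j < m" for j unfolding u2_def using u1c[OF that] B vc Jm by auto
  have u2u1: "u2 j \<bullet> u1 k = 0" if j: "j \<in> J" and k: "k < m" "k \<notin> J" for j k
  proof -
    have "(B *\<^sub>v v j) \<bullet> u1 k = u1 k \<bullet> (B *\<^sub>v v j)"
      by (rule comm_scalar_prod[of _ m]) (use B vc Jm[OF j] u1c[OF k(1)] in auto)
    also have "\<dots> = (transpose_mat B *\<^sub>v u1 k) \<bullet> v j"
      by (rule mat_vec_sp[OF B u1c[OF k(1)] vc[OF Jm(2)[OF j]]])
    also have "\<dots> = 0" unfolding BTz[OF k] using vc[OF Jm(2)[OF j]] by simp
    finally show ?thesis unfolding u2_def using j B vc[OF Jm(2)[OF j]] u1c[OF k(1)] by simp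
  qed
  have u2: "onb m {..<m} u2" unfolding onb_def
  proof (intro conjI ballI)
    fix j assume "j \<in> {..<m}" thus "u2 j \<in> carrier_vec m" using u2c by auto
  next
    fix j k assume j: "j \<in> {..<m}" and k: "k \<in> {..<m}"
    show "u2 j \<bullet> u2 k = (if j = k then 1 else 0)"
    proof (cases "j \<in> J"; cases "k \<in> J")
      assume jJ: "j \<in> J" and kJ: "k \<in> J"
      note jj = Jm[OF jJ] and kk = Jm[OF kJ]
      have "u2 j \<bullet> u2 k = (1 / d j) * ((1 / d k) * ((B *\<^sub>v v j) \<bullet> (B *\<^sub>v v k)))"
        unfolding u2_def using jJ kJ B vc[OF jj(2)] vc[OF kk(2)] by simp
      also have "(B *\<^sub>v v j) \<bullet> (B *\<^sub>v v k) = d j * (d k * (u1 j \<bullet> u1 k))"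
        unfolding Bsp[OF vc[OF jj(2)] vc[OF kk(2)]] AvJ[OF jJ] AvJ[OF kJ]
        using u1c[OF jj(1)] u1c[OF kk(1)] by simp
      finally show ?thesis using u1u1[OF jj(1) kk(1)] jj kk by auto
    next
      assume jJ: "j \<in> J" and kJ: "k \<notin> J"
      hence "j \<noteq> k" by auto
      thus ?thesis using u2u1[OF jJ _ kJ] k kJ by (auto simp: u2_def)
    next
      assume jJ: "j \<notin> J" and kJ: "k \<in> J"
      hence "j \<noteq> k" by auto
      moreover have "u2 j \<bullet> u2 k = u2 k \<bullet> u2 j" by (rule comm_scalar_prod[of _ m]) (use u2c j k in auto)
      ultimately show ?thesis using u2u1[OF kJ _ jJ] j jJ by (auto simp: u2_def)
    next
      assume jJ: "j \<notin> J" and kJ: "k \<notin> J"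
      thus ?thesis using u1u1 j k unfolding u2_def by auto
    qed
  qed
  have Bv: "B *\<^sub>v v k = (if k < m then d k \<cdot>\<^sub>v u2 k else 0\<^sub>v m)" if k: "k < n" for k
  proof (cases "k \<in> J")
    case True
    note kk = Jm[OF True]
    thus ?thesis unfolding u2_def using True B vc[OF k] by (simp add: smult_smult_assoc)
  next
    case False
    show ?thesis
    proof (cases "k < m")
      case True thus ?thesis using Bv0[OF k False] dJ[OF True False] zero_smult_rvec[OF u2c[OF True]] by simp
    qed (use Bv0[OF k False] in simp)
  qed
  have decB: "B = colmat m m u2 * mat m n (\<lambda>(i,j). if i = j then d i else 0) * transpose_mat (colmat n n v)"
    by (rule decomp_from_cols[OF B u2 v Bv])
  have Pu2: "P *\<^sub>v u2 a = (d a)\<^sup>2 \<cdot>\<^sub>v u2 a" if a: "a < m" for a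
  proof (cases "a \<in> J")
    case False thus ?thesis unfolding u2_def using Pu1[OF a] by simp
  next
    case True
    note aa = Jm[OF True]
    have vac: "v a \<in> carrier_vec n" using vc[OF aa(2)] .
    have "transpose_mat A *\<^sub>v (A *\<^sub>v v a) = transpose_mat A *\<^sub>v (d a \<cdot>\<^sub>v u1 a)" unfolding AvJ[OF True] ..
    also have "\<dots> = d a \<cdot>\<^sub>v c a" unfolding c_def by (rule mult_mat_vec[of _ n m]) (use A u1c[OF a] in auto)
    also have "\<dots> = (d a)\<^sup>2 \<cdot>\<^sub>v v a" unfolding cv[OF True] by (simp add: smult_smult_assoc power2_eq_square)
    finally have QA: "transpose_mat A *\<^sub>v (A *\<^sub>v v a) = (d a)\<^sup>2 \<cdot>\<^sub>v v a" .
    have PB: "P *\<^sub>v (B *\<^sub>v v a) = (d a)\<^sup>2 \<cdot>\<^sub>v (B *\<^sub>v v a)"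
    proof -
      have "P *\<^sub>v (B *\<^sub>v v a) = B *\<^sub>v (transpose_mat B *\<^sub>v (B *\<^sub>v v a))" by (rule PvB) (use B vac in auto)
      also have "\<dots> = B *\<^sub>v ((d a)\<^sup>2 \<cdot>\<^sub>v v a)" unfolding QvB[OF vac, symmetric] QA ..
      also have "\<dots> = (d a)\<^sup>2 \<cdot>\<^sub>v (B *\<^sub>v v a)" by (rule mult_mat_vec[OF B vac])
      finally show ?thesis .
    qed
    have "P *\<^sub>v u2 a = (1 / d a) \<cdot>\<^sub>v (P *\<^sub>v (B *\<^sub>v v a))" unfolding u2_def using True
      by (simp, intro mult_mat_vec[OF Pc]) (use B vac in auto)
    also have "\<dots> = (d a)\<^sup>2 \<cdot>\<^sub>v u2 a" unfolding PB u2_def using True by (simp add: smult_smult_assoc mult.commute)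
    finally show ?thesis .
  qed
  have cross: "u2 a \<bullet> u1 b = 0" if ab: "a < m" "b < m" "blk l mu a \<noteq> blk l mu b" for a b
  proof -
    have "u2 a \<bullet> (P *\<^sub>v u1 b) = (P *\<^sub>v u2 a) \<bullet> u1 b" by (rule Psp[OF u2c[OF ab(1)] u1c[OF ab(2)]])
    hence "(d b)\<^sup>2 * (u2 a \<bullet> u1 b) = (d a)\<^sup>2 * (u2 a \<bullet> u1 b)"
      unfolding Pu1[OF ab(2)] Pu2[OF ab(1)] using u2c[OF ab(1)] u1c[OF ab(2)] by simp
    moreover have "(d a)\<^sup>2 \<noteq> (d b)\<^sup>2" using sq_inj[OF bp(1)[OF ab(1)] bp(1)[OF ab(2)]] ab(3) d_blk by metis
    ultimately show ?thesis by simp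
  qed
  define U1 where "U1 = colmat m m u1"
  define U2 where "U2 = colmat m m u2"
  define V where "V = colmat n n v"
  define S where "S = mat m n (\<lambda>(i,j). if i = j then d i else 0)"
  have oU1: "orth_mat m U1" unfolding U1_def by (rule onb_orth[OF u1])
  have oU2: "orth_mat m U2" unfolding U2_def by (rule onb_orth[OF u2])
  have oV: "orth_mat n V" unfolding V_def by (rule onb_orth[OF v])
  note U1c = orth_matD[OF oU1] and U2c = orth_matD[OF oU2]
  define D where "D = transpose_mat U2 * U1"
  have oD: "orth_mat m D" unfolding D_def by (rule orth_prod[OF oU1 oU2])
  note Dc = orth_matD[OF oD]
  have Dent: "D $$ (a,b) = u2 a \<bullet> u1 b" if "a < m" "b < m" for a b
    unfolding D_def U1_def U2_def using that u1c u2c by (simp add: col_colmat)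
  have U2D: "U2 * D = U1"
  proof -
    have "U2 * D = (U2 * transpose_mat U2) * U1" unfolding D_def
      using U1c U2c by (intro assoc_mult_mat[symmetric, of _ m m _ m _ m]) auto
    thus ?thesis using U1c U2c by simp
  qed
  define W where "W = (\<lambda>i. mat (mu i) (mu i) (\<lambda>(x,y). D $$ (bs i + x, bs i + y)))"
  have "\<forall>i<length (map W [0..<l]). map W [0..<l] ! i \<in> carrier_mat (mu i) (mu i)"
    unfolding W_def by auto
  note dbm = dbm_entry[OF this, unfolded length_map length_upt, simplified]
  have Dblk: "D = diag_block_mat (map W [0..<l])"
  proof (rule eq_matI)
    show "dim_row D = dim_row (diag_block_mat (map W [0..<l]))" "dim_col D = dim_col (diag_block_mat (map W [0..<l]))"
      using dbm Dc bsl unfolding bs_def by auto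
    fix a b assume "a < dim_row (diag_block_mat (map W [0..<l]))" "b < dim_col (diag_block_mat (map W [0..<l]))"
    hence ab: "a < m" "b < m" using dbm bsl unfolding bs_def by auto
    let ?i = "blk l mu a"
    note bpa = bp[OF ab(1)]
    have "diag_block_mat (map W [0..<l]) $$ (a,b) = (if bs ?i \<le> b \<and> b < bs ?i + mu ?i
          then W ?i $$ (a - bs ?i, b - bs ?i) else 0)"
      using dbm bpa ab bsl unfolding bs_def by auto
    also have "\<dots> = D $$ (a,b)"
    proof (cases "bs ?i \<le> b \<and> b < bs ?i + mu ?i")
      case True thus ?thesis using bpa unfolding W_def by auto
    next
      case False
      hence "blk l mu b \<noteq> ?i" using bp[OF ab(2)] by auto
      thus ?thesis using False cross[OF ab] Dent[OF ab] by auto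
    qed
    finally show "D $$ (a,b) = diag_block_mat (map W [0..<l]) $$ (a,b)" ..
  qed
  have oW: "orth_mat (mu i) (W i)" if i: "i < l" for i
  proof -
    have Wc: "W i \<in> carrier_mat (mu i) (mu i)" unfolding W_def by auto
    have le: "bs i + mu i \<le> m"
    proof -
      have "bs (Suc i) \<le> bs l" unfolding bs_def by (rule bs_mono) (use i in simp)
      thus ?thesis using bsl unfolding bs_def bs_Suc by simp
    qed
    have WW: "W i * transpose_mat (W i) = 1\<^sub>m (mu i)"
    proof (rule eq_matI)
      fix x y assume "x < dim_row (1\<^sub>m (mu i))" "y < dim_col (1\<^sub>m (mu i))"
      hence xy: "x < mu i" "y < mu i" by auto
      let ?f = "\<lambda>c. D $$ (bs i + x, c) * D $$ (bs i + y, c)"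
      have blkx: "blk l mu (bs i + x) = i" "blk l mu (bs i + y) = i"
        using blk_eq[OF i, of mu] xy unfolding bs_def by auto
      have "(W i * transpose_mat (W i)) $$ (x,y) = (\<Sum>z\<in>{0..<mu i}. ?f (bs i + z))"
        using xy Wc unfolding W_def by (simp add: scalar_prod_def)
      also have "\<dots> = (\<Sum>c\<in>{bs i..<bs i + mu i}. ?f c)"
        using sum.shift_bounds_nat_ivl[of ?f 0 "bs i" "mu i"] by (simp add: add.commute)
      also have "\<dots> = (\<Sum>c\<in>{0..<m}. ?f c)"
      proof (rule sum.mono_neutral_left)
        show "\<forall>c\<in>{0..<m} - {bs i..<bs i + mu i}. ?f c = 0"
        proof
          fix c assume c: "c \<in> {0..<m} - {bs i..<bs i + mu i}"
          hence "blk l mu c \<noteq> i" using bp[of c] by auto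
          hence "D $$ (bs i + x, c) = 0" using cross[of "bs i + x" c] Dent[of "bs i + x" c] c blkx le xy by auto
          thus "?f c = 0" by simp
        qed
      qed (use le in auto)
      also have "\<dots> = (D * transpose_mat D) $$ (bs i + x, bs i + y)"
        using Dc(1) le xy by (simp add: scalar_prod_def)
      also have "\<dots> = 1\<^sub>m m $$ (bs i + x, bs i + y)" unfolding Dc(2) ..
      also have "\<dots> = 1\<^sub>m (mu i) $$ (x,y)" using le xy by simp
      finally show "(W i * transpose_mat (W i)) $$ (x,y) = 1\<^sub>m (mu i) $$ (x,y)" .
    qed (use Wc in auto)
    have "transpose_mat (W i) * W i = 1\<^sub>m (mu i)"
      by (rule mat_mult_left_right_inverse[OF Wc _ WW]) (use Wc in auto)
    thus ?thesis unfolding orth_mat_def using Wc WW by auto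
  qed
  have "rect_diag_mat m n (diag_entry l \<sigma> mu) S" unfolding rect_diag_mat_def S_def d_def by auto
  moreover have "A = U1 * S * transpose_mat V" using decA unfolding U1_def S_def V_def .
  moreover have "B = U2 * S * transpose_mat V" using decB unfolding U2_def S_def V_def .
  moreover have "U1 = U2 * diag_block_mat (map W [0..<l])" using U2D Dblk by simp
  ultimately show ?thesis using oU1 oU2 oV oW by blast
qed


theorem proposition3p1:
  fixes A B :: "real mat" and m n l :: nat and \<sigma> :: "nat \<Rightarrow> real" and mu :: "nat \<Rightarrow> nat"
  assumes A: "A \<in> carrier_mat m n" and B: "B \<in> carrier_mat m n"
    and l: "l \<ge> 1"
    and distinct: "inj_on \<sigma> {..<l}"
    and all_sv: "\<sigma> ` {..<l} = {s. singular_value A s}"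
    and mu: "\<And>i. i < l \<Longrightarrow> mu i = sv_mult A (\<sigma> i)"
    and fits: "\<And>j. n \<le> j \<Longrightarrow> j < m \<Longrightarrow> diag_entry l \<sigma> mu j = 0"
  shows "(A * transpose_mat A = B * transpose_mat B \<and> transpose_mat A * A = transpose_mat B * B)
     \<longleftrightarrow> (\<exists>U1 U2 V S W. orth_mat m U1 \<and> orth_mat m U2 \<and> orth_mat n V \<and>
            rect_diag_mat m n (diag_entry l \<sigma> mu) S \<and>
            A = U1 * S * transpose_mat V \<and> B = U2 * S * transpose_mat V \<and>
            (\<forall>i<l. orth_mat (mu i) (W i)) \<and>
            U1 = U2 * diag_block_mat (map W [0..<l]))"
proof
  assume "A * transpose_mat A = B * transpose_mat B \<and> transpose_mat A * A = transpose_mat B * B"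
  thus "\<exists>U1 U2 V S W. orth_mat m U1 \<and> orth_mat m U2 \<and> orth_mat n V \<and>
            rect_diag_mat m n (diag_entry l \<sigma> mu) S \<and>
            A = U1 * S * transpose_mat V \<and> B = U2 * S * transpose_mat V \<and>
            (\<forall>i<l. orth_mat (mu i) (W i)) \<and>
            U1 = U2 * diag_block_mat (map W [0..<l])"
    using forward[OF A B distinct all_sv mu fits] by blast
next
  assume "\<exists>U1 U2 V S W. orth_mat m U1 \<and> orth_mat m U2 \<and> orth_mat n V \<and>
            rect_diag_mat m n (diag_entry l \<sigma> mu) S \<and>
            A = U1 * S * transpose_mat V \<and> B = U2 * S * transpose_mat V \<and>
            (\<forall>i<l. orth_mat (mu i) (W i)) \<and>
            U1 = U2 * diag_block_mat (map W [0..<l])"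
  then obtain U1 U2 V S W where h: "orth_mat m U1" "orth_mat m U2" "orth_mat n V"
    "rect_diag_mat m n (diag_entry l \<sigma> mu) S"
    "A = U1 * S * transpose_mat V" "B = U2 * S * transpose_mat V"
    "\<forall>i<l. orth_mat (mu i) (W i)" "U1 = U2 * diag_block_mat (map W [0..<l])" by blast
  show "A * transpose_mat A = B * transpose_mat B \<and> transpose_mat A * A = transpose_mat B * B"
    by (rule backward[OF A B fits h])
qed

end
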